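(* Let $0<r<\frac12$ and let $X\subseteq S^1$ be a finite subset. If $X$ is an $\varepsilon$-covering of $S^1$ for some $\varepsilon>0$, then $\mathrm{wf}_{<}(X;r)>r-2\varepsilon$.
   Context: $S^1$ is the circle of circumference $1$ with arc-length metric; points are identified with numbers in $[0,1)$ and $\vec d(x,y)$ is the clockwise distance from $x$ to $y$. $X$ is an $\varepsilon$-covering of $S^1$ if every point of $S^1$ is at distance less than $\varepsilon$ from some point of $X$. For finite $X$ and $0<r<\frac12$, $\overrightarrow{\mathbf{VR}}_{<}(X;r)$ is the directed graph on $X$ with $x_1\to x_2$ iff $0<\vec d(x_1,x_2)<r$, a cyclic graph with respect to the clockwise order of $X$, and $\mathrm{wf}_{<}(X;r)$ is its winding fraction: $\sup\{k/n:\exists$ cyclic homomorphism $\overrightarrow{C_n^k}\to\overrightarrow{\mathbf{VR}}_{<}(X;r)\}$. Here $\overrightarrow{C_n^k}$ ($0\le k<n/2$) has vertices $\{0,\dots,n-1\}$ with $i\to j$ iff $0<(j-i)\bmod n\le k$; a cyclic homomorphism between cyclic graphs (directed graphs with cyclic vertex orders $v_0\prec\cdots\prec v_{n-1}$ such that $v_i\to v_j$ implies $j=i+1$ or both $v_i\to v_{j-1}$, $v_{i+1}\to v_j$) is a vertex map that sends each edge $v\to w$ to an edge or a single vertex, whose fibres are cyclic intervals of consecutive vertices, which satisfies "$f(s)\prec f(s')\prec f(s'')$ in cyclic betweenness implies $s\prec s'\prec s''$", and which is non-constant if the source has a directed cycle. *)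

theory Defs
  imports Complex_Main
begin

text \<open>Points of the circle S^1 (circumference 1) are reals in [0,1).
  Clockwise distance from x to y.\<close>
definition cw_dist :: "real \<Rightarrow> real \<Rightarrow> real" where
  "cw_dist x y = frac (y - x)"

definition circ_dist :: "real \<Rightarrow> real \<Rightarrow> real" where
  "circ_dist x y = min (cw_dist x y) (cw_dist y x)"

definition eps_covering :: "real set \<Rightarrow> real \<Rightarrow> bool" where
  "eps_covering X \<epsilon> \<longleftrightarrow> (\<forall>p. 0 \<le> p \<and> p < 1 \<longrightarrow> (\<exists>x\<in>X. circ_dist p x < \<epsilon>))"

text \<open>Cyclic graphs are represented on vertex set {0..<N}, with cyclic order
  0 < 1 < ... < N-1 (then back to 0), and an edge relation E.\<close>

text \<open>Strict cyclic betweenness a < b < c in the cyclic order on {0..<N}.\<close>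
definition cbtw :: "nat \<Rightarrow> nat \<Rightarrow> nat \<Rightarrow> nat \<Rightarrow> bool" where
  "cbtw N a b c \<longleftrightarrow> a < N \<and> b < N \<and> c < N \<and> a \<noteq> b \<and> b \<noteq> c \<and> a \<noteq> c \<and>
     (b + N - a) mod N < (c + N - a) mod N"

definition cyc_interval :: "nat \<Rightarrow> nat set \<Rightarrow> bool" where
  "cyc_interval N S \<longleftrightarrow> (\<exists>a<N. \<exists>l\<le>N. S = {(a + i) mod N | i. i < l})"

definition has_dcycle :: "nat \<Rightarrow> (nat \<Rightarrow> nat \<Rightarrow> bool) \<Rightarrow> bool" where
  "has_dcycle N E \<longleftrightarrow> (\<exists>v<N. (\<lambda>a b. a < N \<and> b < N \<and> E a b)\<^sup>+\<^sup>+ v v)"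

definition cyclic_hom ::
  "nat \<Rightarrow> (nat \<Rightarrow> nat \<Rightarrow> bool) \<Rightarrow> nat \<Rightarrow> (nat \<Rightarrow> nat \<Rightarrow> bool) \<Rightarrow> (nat \<Rightarrow> nat) \<Rightarrow> bool" where
  "cyclic_hom N E M F f \<longleftrightarrow>
     (\<forall>s<N. f s < M) \<and>
     (\<forall>v<N. \<forall>w<N. E v w \<longrightarrow> F (f v) (f w) \<or> f v = f w) \<and>
     (\<forall>y<M. cyc_interval N {s. s < N \<and> f s = y}) \<and>
     (\<forall>s<N. \<forall>s'<N. \<forall>s''<N. cbtw M (f s) (f s') (f s'') \<longrightarrow> cbtw N s s' s'') \<and>
     (has_dcycle N E \<longrightarrow> (\<exists>s<N. \<exists>s'<N. f s \<noteq> f s'))"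

definition Cnk_edge :: "nat \<Rightarrow> nat \<Rightarrow> nat \<Rightarrow> nat \<Rightarrow> bool" where
  "Cnk_edge n k i j \<longleftrightarrow> 0 < (j + n - i) mod n \<and> (j + n - i) mod n \<le> k"

text \<open>The directed Vietoris-Rips graph VR_<(X;r): vertex i is the i-th point of X
  in clockwise (increasing) order.\<close>
definition vr_edge :: "real set \<Rightarrow> real \<Rightarrow> nat \<Rightarrow> nat \<Rightarrow> bool" where
  "vr_edge X r i j \<longleftrightarrow>
     (let xs = sorted_list_of_set X in
        0 < cw_dist (xs ! i) (xs ! j) \<and> cw_dist (xs ! i) (xs ! j) < r)"

definition winding_fraction :: "real set \<Rightarrow> real \<Rightarrow> real" where
  "winding_fraction X r = Sup {real k / real n | k n. 2 * k < n \<and>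
      (\<exists>f. cyclic_hom n (Cnk_edge n k) (card X) (vr_edge X r) f)}"

end

theory Submission imports Defs begin

lemma modsub: assumes "(a::nat) < N" "b < N" shows "(b + N - a) mod N = (if a \<le> b then b - a else b + N - a)"
proof (cases "a \<le> b")
  case True
  then have "b + N - a = (b - a) + N" by arith
  then have "(b + N - a) mod N = (b - a) mod N" by simp
  moreover have "b - a < N" using assms by arith
  ultimately show ?thesis using True by simp
next
  case False
  then show ?thesis using \<open>a<N\<close> \<open>b<N\<close> by simp
qed

lemma cbtw_iff: "cbtw N a b c \<longleftrightarrow> a < N \<and> b < N \<and> c < N \<and>
   ((a < b \<and> b < c) \<or> (b < c \<and> c < a) \<or> (c < a \<and> a < b))"
  unfolding cbtw_def
  apply (cases "a < N \<and> b < N \<and> c < N")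
   apply (simp add: modsub)
   apply (auto split: if_splits)
  done

lemma notcyc: "\<not> has_dcycle 1 (Cnk_edge 1 0)"
  unfolding has_dcycle_def Cnk_edge_def
  by (auto dest: tranclpD)


lemma frac_sub_frac1: "frac (x - frac y) = frac (x - y)"
proof -
  have "x - frac y = (x - y) + of_int \<lfloor>y\<rfloor>" by (simp add: frac_def)
  then show ?thesis by (metis frac_add_of_int_right)
qed

lemma frac_sub_frac2: "frac (frac y - x) = frac (y - x)"
proof -
  have "frac y - x = (y - x) + of_int (- \<lfloor>y\<rfloor>)" by (simp add: frac_def)
  then show ?thesis by (metis frac_add_of_int_right)
qed

lemma frac_neg: "0 < u \<Longrightarrow> u < 1 \<Longrightarrow> frac (- u) = 1 - u"
  by (simp add: frac_unique_iff)

lemma frac_shift: "-1 < u \<Longrightarrow> u < 0 \<Longrightarrow> frac u = u + 1"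
proof -
  assume "-1 < u" "u < 0"
  then show ?thesis unfolding frac_unique_iff
    by (simp add: Ints_minus Ints_1)
qed

lemma frac_pos_ne: fixes a y :: real assumes "0 \<le> a" "a < 1" "0 \<le> y" "y < 1" "y \<noteq> a"
  shows "0 < frac (y - a)"
proof -
  have "y - a \<notin> \<int>"
  proof
    assume "y - a \<in> \<int>"
    then obtain m where m: "y - a = of_int m" by (auto elim: Ints_cases)
    have "(-1::real) < of_int m" using m assms by linarith
    have "of_int m < (1::real)" using m assms by linarith
    then have "m = 0" using \<open>(-1::real) < of_int m\<close> by linarith
    with m have "y = a" by simp
    then show False using assms by simp
  qed
  then show ?thesis using frac_ge_0[of "y - a"] frac_eq_0_iff[of "y-a"] by linarith
qed

lemma gap_lemma:
  fixes X :: "real set"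
  assumes cov: "eps_covering X \<epsilon>" and aX: "a \<in> X"
    and gap: "\<forall>x\<in>X. x \<noteq> a \<longrightarrow> gg \<le> frac (x - a)"
    and g0: "0 < gg" and g1: "gg < 1"
  shows "gg < 2 * \<epsilon>"
proof -
  define p where "p = frac (a + gg/2)"
  have "0 \<le> p" "p < 1" unfolding p_def by (auto simp: frac_lt_1)
  then obtain x where xX: "x \<in> X" and cd: "circ_dist p x < \<epsilon>"
    using cov unfolding eps_covering_def by blast
  define u where "u = frac (x - a)"
  have c1: "cw_dist p x = frac (u - gg/2)"
    unfolding cw_dist_def p_def u_def frac_sub_frac1 frac_sub_frac2
    by (simp add: algebra_simps)
  have c2: "cw_dist x p = frac (gg/2 - u)"
    unfolding cw_dist_def p_def u_def frac_sub_frac1 frac_sub_frac2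
    by (simp add: algebra_simps)
  have u0: "0 \<le> u" "u < 1" unfolding u_def by (auto simp: frac_lt_1)
  have "gg/2 \<le> cw_dist p x \<and> gg/2 \<le> cw_dist x p"
  proof (cases "x = a")
    case True
    then have "u = 0" unfolding u_def by simp
    then show ?thesis unfolding c1 c2 using g0 g1 by (simp add: frac_neg)
  next
    case False
    then have ug: "gg \<le> u" using gap xX unfolding u_def by blast
    have "frac (u - gg/2) = u - gg/2" using ug u0 g0 by (simp add: frac_eq)
    moreover have "frac (gg/2 - u) = gg/2 - u + 1" using ug u0 g0 by (intro frac_shift) auto
    ultimately show ?thesis unfolding c1 c2 using ug u0 by simp
  qed
  then show ?thesis using cd unfolding circ_dist_def by linarith
qed

lemma wf_bdd: "bdd_above {real k / real n | k n. 2 * k < n \<and> P k n}"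
proof (rule bdd_aboveI[where M="1/2"])
  fix x assume "x \<in> {real k / real n | k n. 2 * k < n \<and> P k n}"
  then obtain k n where x: "x = real k / real n" and kn: "2*k < n" by blast
  then have "2 * real k < real n" by linarith
  then show "x \<le> 1/2" unfolding x using kn by (simp add: field_simps)
qed

lemma wf_ge:
  assumes "2 * k < n" "cyclic_hom n (Cnk_edge n k) (card X) (vr_edge X r) f"
  shows "real k / real n \<le> winding_fraction X r"
  unfolding winding_fraction_def
  apply (rule cSup_upper)
  using assms apply blast
  by (rule wf_bdd)

lemma const_hom:
  assumes "finite X" "X \<noteq> {}"
  shows "cyclic_hom 1 (Cnk_edge 1 0) (card X) F (\<lambda>_. 0)"
proof -
  have cX: "0 < card X" using assms by (simp add: card_gt_0_iff)
  have fib: "cyc_interval 1 {s. s < 1 \<and> 0 = y}" for y :: nat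
  proof (cases "y = 0")
    case True
    have "{s. s < (1::nat) \<and> 0 = y} = {(0 + i) mod 1 | i. i < (1::nat)}" using True by auto
    then show ?thesis unfolding cyc_interval_def by blast
  next
    case False
    have "{s. s < (1::nat) \<and> 0 = y} = {(0 + i) mod 1 | i. i < (0::nat)}" using False by auto
    then show ?thesis unfolding cyc_interval_def by blast
  qed
  show ?thesis unfolding cyclic_hom_def using cX fib notcyc by (auto simp: cbtw_def)
qed


lemma main_constr:
  fixes X :: "real set" and r \<epsilon> :: real
  assumes r0: "0 < r" and r1: "r < 1/2" and fin: "finite X" and sub: "X \<subseteq> {0..<1}"
    and e0: "0 < \<epsilon>" and cov: "eps_covering X \<epsilon>" and re: "2*\<epsilon> \<le> r"
  shows "\<exists>k n f. 2*k < n \<and> cyclic_hom n (Cnk_edge n k) (card X) (vr_edge X r) f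
           \<and> r - 2*\<epsilon> < real k / real n"
proof -
  have Xne: "X \<noteq> {}" using cov unfolding eps_covering_def by force
  define a0 where "a0 = Min X"
  have a0X: "a0 \<in> X" unfolding a0_def using fin Xne by simp
  have a0min: "\<And>x. x \<in> X \<Longrightarrow> a0 \<le> x" unfolding a0_def using fin by simp
  have inX: "\<And>x. x \<in> X \<Longrightarrow> 0 \<le> x \<and> x < 1" using sub by auto
  have card2: "\<exists>y\<in>X. y \<noteq> a0"
  proof (rule ccontr)
    assume "\<not> ?thesis"
    then have Xa: "X = {a0}" using a0X by blast
    define p where "p = frac (a0 + 1/2)"
    have "0 \<le> p" "p < 1" unfolding p_def by (auto simp: frac_lt_1)
    then obtain x where "x \<in> X" and cd: "circ_dist p x < \<epsilon>"
      using cov unfolding eps_covering_def by blast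
    then have "x = a0" using Xa by blast
    have "cw_dist p x = frac (- (1/2))" unfolding cw_dist_def p_def frac_sub_frac1 \<open>x = a0\<close>
      by simp
    also have "\<dots> = 1/2" by (simp add: frac_neg)
    finally have c1: "cw_dist p x = 1/2" .
    have "cw_dist x p = frac (1/2)" unfolding cw_dist_def p_def frac_sub_frac2 \<open>x = a0\<close>
      by simp
    also have "\<dots> = 1/2" by (simp add: frac_eq)
    finally have c2: "cw_dist x p = 1/2" .
    show False using cd c1 c2 re r1 unfolding circ_dist_def by simp
  qed
  define g where "g a = Min ((\<lambda>y. frac (y - a)) ` (X - {a}))" for a
  have Xa_ne: "X - {a} \<noteq> {}" if "a \<in> X" for a
    using card2 a0X by blast
  have gle: "g a \<le> frac (y - a)" if "a \<in> X" "y \<in> X" "y \<noteq> a" for a y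
    unfolding g_def using fin that by (intro Min_le) auto
  have gex: "\<exists>y\<in>X. y \<noteq> a \<and> g a = frac (y - a)" if "a \<in> X" for a
  proof -
    have "g a \<in> (\<lambda>y. frac (y - a)) ` (X - {a})"
      unfolding g_def using fin Xa_ne[OF that] by (intro Min_in) auto
    then show ?thesis by auto
  qed
  have gpos: "0 < g a" if aX: "a \<in> X" for a
  proof -
    obtain y where "y \<in> X" "y \<noteq> a" "g a = frac (y - a)" using gex[OF aX] by blast
    then show ?thesis using frac_pos_ne inX aX by metis
  qed
  have glt1: "g a < 1" if "a \<in> X" for a
    using gex[OF that] frac_lt_1 by metis
  have glt: "g a < 2 * \<epsilon>" if "a \<in> X" for a
    by (rule gap_lemma[OF cov that]) (use gle that gpos glt1 in \<open>auto\<close>)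
  define \<delta> where "\<delta> = Max (g ` X)"
  have gd: "g a \<le> \<delta>" if "a \<in> X" for a unfolding \<delta>_def using fin that by simp
  have dlt: "\<delta> < 2 * \<epsilon>" unfolding \<delta>_def using fin Xne glt by auto
  have d0: "0 < \<delta>" using gd[OF a0X] gpos[OF a0X] by linarith
  obtain m :: nat where m: "inverse (real (Suc m)) < 2 * \<epsilon> - \<delta>"
    using reals_Archimedean[of "2 * \<epsilon> - \<delta>"] dlt by auto
  define n where "n = Suc (Suc m)"
  have n2: "2 \<le> n" unfolding n_def by simp
  have nsmall: "1 / real n < 2 * \<epsilon> - \<delta>"
  proof -
    have "1 / real n \<le> inverse (real (Suc m))" unfolding n_def
      by (simp add: field_simps)
    then show ?thesis using m by linarith
  qed
  have npos: "0 < real n" using n2 by simp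
  define k where "k = nat \<lfloor>(r - \<delta>) * real n\<rfloor>"
  have rd: "0 < r - \<delta>" using dlt re by linarith
  have kle: "real k \<le> (r - \<delta>) * real n" unfolding k_def using rd npos by simp
  have kgt: "(r - \<delta>) * real n - 1 < real k" unfolding k_def using rd npos by linarith
  have k2n: "2 * k < n"
  proof -
    have "(r - \<delta>) * real n < 1/2 * real n" using r1 d0 npos
      by (intro mult_strict_right_mono) auto
    then have "2 * real k < real n" using kle by linarith
    then show ?thesis by linarith
  qed
  have kn_le: "real k / real n \<le> r - \<delta>" using kle npos by (simp add: field_simps)
  have ratio: "r - 2 * \<epsilon> < real k / real n"
  proof -
    have "((r - \<delta>) * real n - 1) / real n < real k / real n"
      by (rule divide_strict_right_mono) (use kgt npos in auto)
    moreover have "((r - \<delta>) * real n - 1) / real n = r - \<delta> - 1 / real n"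
      using npos by (simp add: field_simps)
    ultimately have "r - \<delta> - 1 / real n < real k / real n" by simp
    then show ?thesis using nsmall by linarith
  qed
  define t where "t i = a0 + real i / real n" for i
  define \<phi> where "\<phi> i = Max {x\<in>X. x \<le> t i}" for i
  have tmono: "i \<le> j \<Longrightarrow> t i \<le> t j" for i j
    unfolding t_def using npos by (simp add: divide_right_mono)
  have a0t: "a0 \<le> t i" for i unfolding t_def using npos by simp
  have phiX: "\<phi> i \<in> X \<and> \<phi> i \<le> t i" for i
  proof -
    have "{x\<in>X. x \<le> t i} \<noteq> {}" using a0X a0t by blast
    then have "\<phi> i \<in> {x\<in>X. x \<le> t i}" unfolding \<phi>_def using fin by (intro Max_in) auto
    then show ?thesis by simp
  qed
  have phige: "x \<in> X \<Longrightarrow> x \<le> t i \<Longrightarrow> x \<le> \<phi> i" for x i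
    unfolding \<phi>_def using fin by (intro Max_ge) auto
  have phimono: "i \<le> j \<Longrightarrow> \<phi> i \<le> \<phi> j" for i j
    using phige phiX tmono by (meson order_trans)
  have Dlt: "t i - \<phi> i < \<delta>" if "i < n" for i
  proof -
    have pX: "\<phi> i \<in> X" using phiX by blast
    obtain y where yX: "y \<in> X" and yne: "y \<noteq> \<phi> i" and gy: "g (\<phi> i) = frac (y - \<phi> i)"
      using gex[OF pX] by blast
    have "t i - \<phi> i < frac (y - \<phi> i)"
    proof (cases "y > \<phi> i")
      case True
      then have "y > t i" using phige[OF yX, of i] by linarith
      moreover have "frac (y - \<phi> i) = y - \<phi> i" using True inX[OF yX] inX[OF pX]
        by (simp add: frac_eq)
      ultimately show ?thesis by simp
    next
      case False
      then have yl: "y < \<phi> i" using yne by simp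
      have "frac (y - \<phi> i) = y - \<phi> i + 1" using yl inX[OF yX] inX[OF pX]
        by (intro frac_shift) auto
      moreover have "t i < a0 + 1" unfolding t_def using that npos by simp
      moreover have "a0 \<le> y" using a0min yX by simp
      ultimately show ?thesis by simp
    qed
    then show ?thesis using gy gd[OF pX] by simp
  qed
  define xs where "xs = sorted_list_of_set X"
  have xs_d: "distinct xs" and xs_s: "set xs = X" and xs_l: "length xs = card X"
    and xs_sw: "sorted_wrt (<) xs"
    unfolding xs_def using fin by (auto simp: strict_sorted_list_of_set)
  define idx where "idx = the_inv_into {..<card X} ((!) xs)"
  have bij: "bij_betw ((!) xs) {..<card X} X"
    using bij_betw_nth[OF xs_d] xs_l xs_s by simp
  have idx1: "idx x < card X \<and> xs ! idx x = x" if "x \<in> X" for x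
    unfolding idx_def
    using bij_betw_the_inv_into[OF bij] f_the_inv_into_f_bij_betw[OF bij that] that
    by (auto simp: bij_betw_def)
  have ordiff: "i < j \<longleftrightarrow> xs ! i < xs ! j" if "i < card X" "j < card X" for i j
  proof
    assume "i < j" then show "xs ! i < xs ! j" using sorted_wrt_nth_less[OF xs_sw] that xs_l by simp
  next
    assume a: "xs ! i < xs ! j"
    show "i < j"
    proof (rule ccontr)
      assume "\<not> i < j"
      then have "j < i \<or> j = i" by auto
      then show False using a sorted_wrt_nth_less[OF xs_sw, of j i] that xs_l by auto
    qed
  qed
  have idxlt: "idx x < idx y \<longleftrightarrow> x < y" if "x \<in> X" "y \<in> X" for x y
    using ordiff[of "idx x" "idx y"] idx1 that by simp
  have idxeq: "idx x = idx y \<longleftrightarrow> x = y" if "x \<in> X" "y \<in> X" for x y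
    using idx1 that by metis
  define f where "f i = idx (\<phi> i)" for i
  have fmono: "i \<le> j \<Longrightarrow> f i \<le> f j" for i j
    unfolding f_def using phimono idxlt idxeq phiX
    by (metis linorder_not_less order_le_less)
  have flt: "f i < f j \<Longrightarrow> i < j" for i j
    using fmono by (meson linorder_not_less)
  have xsf: "xs ! f i = \<phi> i" for i unfolding f_def using idx1 phiX by blast
  have c1: "\<forall>s<n. f s < card X" unfolding f_def using idx1 phiX by blast
  have c2: "\<forall>v<n. \<forall>w<n. Cnk_edge n k v w \<longrightarrow> vr_edge X r (f v) (f w) \<or> f v = f w"
  proof (intro allI impI)
    fix v w assume vn: "v < n" and wn: "w < n" and e: "Cnk_edge n k v w"
    show "vr_edge X r (f v) (f w) \<or> f v = f w"
    proof (cases "\<phi> v = \<phi> w")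
      case True then show ?thesis unfolding f_def by simp
    next
      case ne: False
      have pv: "0 \<le> \<phi> v \<and> \<phi> v < 1" and pw: "0 \<le> \<phi> w \<and> \<phi> w < 1" using inX phiX by blast+
      have Dv: "t v - \<phi> v < \<delta>" using Dlt vn by blast
      have Dw: "\<phi> w \<le> t w" using phiX by blast
      have "0 < frac (\<phi> w - \<phi> v) \<and> frac (\<phi> w - \<phi> v) < r"
      proof (cases "v < w")
        case True
        then have "(w + n - v) mod n = w - v" using modsub[OF vn wn] by simp
        then have wk: "w - v \<le> k" using e unfolding Cnk_edge_def by simp
        have le: "\<phi> v < \<phi> w" using phimono[of v w] True ne by simp
        then have fr: "frac (\<phi> w - \<phi> v) = \<phi> w - \<phi> v" using pv pw by (simp add: frac_eq)
        have "t w - t v = real (w - v) / real n" unfolding t_def using True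
          by (simp add: of_nat_diff diff_divide_distrib)
        also have "\<dots> \<le> real k / real n" using wk npos by (simp add: divide_right_mono)
        finally have "t w - t v \<le> r - \<delta>" using kn_le by linarith
        then show ?thesis using fr le Dv Dw by linarith
      next
        case False
        then have wv: "w < v" using e unfolding Cnk_edge_def by (cases "v = w") auto
        then have "(w + n - v) mod n = w + n - v" using modsub[OF vn wn] by simp
        then have wk: "w + n - v \<le> k" using e unfolding Cnk_edge_def by simp
        have le: "\<phi> w < \<phi> v" using phimono[of w v] wv ne by simp
        then have fr: "frac (\<phi> w - \<phi> v) = \<phi> w - \<phi> v + 1" using pv pw by (intro frac_shift) auto
        have "t w - t v + 1 = real (w + n - v) / real n" unfolding t_def using wv vn npos
          by (simp add: of_nat_diff field_simps)
        also have "\<dots> \<le> real k / real n" using wk npos by (simp add: divide_right_mono)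
        finally have "t w - t v + 1 \<le> r - \<delta>" using kn_le by linarith
        then show ?thesis using fr le Dv Dw pv pw by linarith
      qed
      then have "vr_edge X r (f v) (f w)" unfolding vr_edge_def Let_def cw_dist_def
        using xsf xs_def by simp
      then show ?thesis by simp
    qed
  qed
  have c3: "\<forall>y<card X. cyc_interval n {s. s < n \<and> f s = y}"
  proof (intro allI impI)
    fix y assume "y < card X"
    define F where "F = {s. s < n \<and> f s = y}"
    have finF: "finite F" unfolding F_def by simp
    show "cyc_interval n {s. s < n \<and> f s = y}"
    proof (cases "F = {}")
      case True
      have "{s. s < n \<and> f s = y} = {(0 + i) mod n | i. i < (0::nat)}" using True F_def by auto
      then show ?thesis unfolding cyc_interval_def using n2 by (intro exI[of _ 0]) auto
    next
      case False
      define a where "a = Min F"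
      define b where "b = Max F"
      have aF: "a \<in> F" and bF: "b \<in> F" unfolding a_def b_def using finF False by auto
      have ab: "a \<le> b" unfolding a_def b_def using finF False by simp
      have Feq: "F = {a..b}"
      proof
        show "F \<subseteq> {a..b}" unfolding a_def b_def using finF by auto
      next
        show "{a..b} \<subseteq> F"
        proof
          fix s assume "s \<in> {a..b}"
          then have "a \<le> s" "s \<le> b" by auto
          then have "f a \<le> f s" "f s \<le> f b" using fmono by auto
          then show "s \<in> F" using aF bF \<open>s \<le> b\<close> unfolding F_def by auto
        qed
      qed
      have bn: "b < n" using bF F_def by simp
      have "{s. s < n \<and> f s = y} = {(a + i) mod n | i. i < b - a + 1}"
      proof
        show "{s. s < n \<and> f s = y} \<subseteq> {(a + i) mod n | i. i < b - a + 1}"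
        proof
          fix s assume "s \<in> {s. s < n \<and> f s = y}"
          then have "s \<in> {a..b}" using Feq F_def by blast
          then have "s = (a + (s - a)) mod n \<and> s - a < b - a + 1" using bn by auto
          then show "s \<in> {(a + i) mod n | i. i < b - a + 1}" by blast
        qed
      next
        show "{(a + i) mod n | i. i < b - a + 1} \<subseteq> {s. s < n \<and> f s = y}"
        proof
          fix s assume "s \<in> {(a + i) mod n | i. i < b - a + 1}"
          then obtain i where s: "s = (a + i) mod n" and i: "i < b - a + 1" by blast
          then have "a + i \<in> {a..b}" using ab by auto
          moreover then have "s = a + i" using s bn by auto
          ultimately show "s \<in> {s. s < n \<and> f s = y}" using Feq F_def by blast
        qed
      qed
      moreover have "b - a + 1 \<le> n" "a < n" using bn ab by auto
      ultimately show ?thesis unfolding cyc_interval_def by blast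
    qed
  qed
  have c4: "\<forall>s<n. \<forall>s'<n. \<forall>s''<n. cbtw (card X) (f s) (f s') (f s'') \<longrightarrow> cbtw n s s' s''"
    unfolding cbtw_iff using flt by blast
  have c5: "\<exists>s<n. \<exists>s'<n. f s \<noteq> f s'"
  proof -
    have p0: "\<phi> 0 = a0"
      using phiX[of 0] phige[OF a0X, of 0] a0min unfolding t_def by force
    obtain y where yX: "y \<in> X" and yne: "y \<noteq> a0" and gy: "g a0 = frac (y - a0)"
      using gex[OF a0X] by blast
    have ya: "a0 < y" using a0min[OF yX] yne by simp
    then have "frac (y - a0) = y - a0" using inX[OF yX] inX[OF a0X] by (simp add: frac_eq)
    then have "y - a0 < 1/2" using gy gd[OF a0X] dlt re r1 by linarith
    moreover have "1/2 \<le> real (n - 1) / real n" using n2 by (simp add: of_nat_diff field_simps)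
    ultimately have "y \<le> t (n - 1)" unfolding t_def by linarith
    then have "a0 < \<phi> (n - 1)" using phige[OF yX] ya by fastforce
    then have "f 0 \<noteq> f (n - 1)" unfolding f_def using idxeq phiX p0 by (metis less_irrefl)
    moreover have "0 < n" "n - 1 < n" using n2 by auto
    ultimately show ?thesis by blast
  qed
  have "cyclic_hom n (Cnk_edge n k) (card X) (vr_edge X r) f"
    unfolding cyclic_hom_def using c1 c2 c3 c4 c5 by blast
  then show ?thesis using k2n ratio by blast
qed
theorem proposition5p2:
  fixes X :: "real set" and r \<epsilon> :: real
  assumes "0 < r" and "r < 1/2"
    and "finite X" and "X \<subseteq> {0..<1}"
    and "0 < \<epsilon>" and "eps_covering X \<epsilon>"
  shows "winding_fraction X r > r - 2 * \<epsilon>"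
proof (cases "r < 2 * \<epsilon>")
  case True
  have Xne: "X \<noteq> {}" using assms(6) unfolding eps_covering_def by force
  have "real 0 / real 1 \<le> winding_fraction X r"
    by (rule wf_ge[where f="\<lambda>_. 0"]) (use const_hom[OF assms(3) Xne] in auto)
  then show ?thesis using True by simp
next
  case False
  then obtain k n f where "2*k < n" "cyclic_hom n (Cnk_edge n k) (card X) (vr_edge X r) f"
     "r - 2*\<epsilon> < real k / real n"
    using main_constr[OF assms(1-6)] by force
  then show ?thesis using wf_ge by fastforce
qed

end
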